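(* For Lebesgue almost every $y\in[0,1]$, the fibre $K_y:=\{x\in\mathbb{R}:(x,y)\in K\}$ contains a nontrivial interval.
   Context: For $k\ge 0$ and $n\ge 1$ let $t_{k,n}:=\frac{1}{2^k n}$. Define the similarities of $\mathbb{R}^2$: $U(x,y)=\left(\frac{x}{2},\frac{y+1}{2}\right)$, $D_0(x,y)=\left(\frac{x}{2},\frac{y}{2}\right)$, and $D_{k,n}(x,y)=\left(\frac{x+t_{k,n}}{2},\frac{y}{2}\right)$ for $k\ge0,n\ge1$. $K$ is the unique non-empty compact set $K\subset\mathbb{R}^2$ satisfying $K=U(K)\cup D_0(K)\cup\bigcup_{k\ge0,n\ge1}D_{k,n}(K)$. *)

theory Defs
  imports "HOL-Analysis.Analysis"
begin

definition tkn :: "nat \<Rightarrow> nat \<Rightarrow> real" where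
  "tkn k n = 1 / (2 ^ k * real n)"

definition U_map :: "real \<times> real \<Rightarrow> real \<times> real" where
  "U_map p = (fst p / 2, (snd p + 1) / 2)"

definition D0_map :: "real \<times> real \<Rightarrow> real \<times> real" where
  "D0_map p = (fst p / 2, snd p / 2)"

definition Dkn_map :: "nat \<Rightarrow> nat \<Rightarrow> real \<times> real \<Rightarrow> real \<times> real" where
  "Dkn_map k n p = ((fst p + tkn k n) / 2, snd p / 2)"

definition is_attractor :: "(real \<times> real) set \<Rightarrow> bool" where
  "is_attractor K \<longleftrightarrow> K \<noteq> {} \<and> compact K \<and>
     K = U_map ` K \<union> D0_map ` K \<union> (\<Union>k. \<Union>n\<in>{1..}. Dkn_map k n ` K)"

definition fibre :: "(real \<times> real) set \<Rightarrow> real \<Rightarrow> real set" where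
  "fibre K y = {x. (x, y) \<in> K}"

end

theory Submission
  imports Defs "HOL-Library.Infinite_Set"
begin


definition Tset :: "real set" where "Tset = insert 0 {1 / real n | n. n \<ge> 1}"

fun Gc :: "(nat \<Rightarrow> real) \<Rightarrow> (nat \<Rightarrow> real) \<Rightarrow> nat \<Rightarrow> real\<times>real \<Rightarrow> real\<times>real" where
  "Gc e bt 0 p = p"
| "Gc e bt (Suc N) p = Gc e bt N ((fst p + e N)/2, (snd p + bt N)/2)"

lemma Gc_formula: "Gc e bt N p = ((\<Sum>i<N. e i / 2^(i+1)) + fst p / 2^N, (\<Sum>i<N. bt i / 2^(i+1)) + snd p / 2^N)"
proof (induction N arbitrary: p)
  case 0 then show ?case by simp
next
  case (Suc N) then show ?case by (simp add: field_simps)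
qed

lemma Tset_range: "t \<in> Tset \<Longrightarrow> 0 \<le> t \<and> t \<le> 1"
  unfolding Tset_def by auto

lemma code_in_K:
  assumes att: "is_attractor K" and eT: "\<And>i. e i \<in> Tset" and ez: "\<And>i. bb i \<Longrightarrow> e i = 0"
  shows "(suminf (\<lambda>i. e i / 2^(i+1)), suminf (\<lambda>i. (if bb i then 1 else 0) / 2^(i+1))) \<in> K"
proof -
  define bt where "bt i = (if bb i then 1 else 0::real)" for i
  have Keq: "K = U_map ` K \<union> D0_map ` K \<union> (\<Union>k. \<Union>n\<in>{1..}. Dkn_map k n ` K)"
    and Kne: "K \<noteq> {}" and Kc: "compact K" using att unfolding is_attractor_def by auto
  have step: "((fst p + e N)/2, (snd p + bt N)/2) \<in> K" if "p \<in> K" for p N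
  proof (cases "bb N")
    case True
    then have "((fst p + e N)/2, (snd p + bt N)/2) = U_map p" using ez[of N] by (simp add: bt_def U_map_def)
    then show ?thesis using that Keq by (metis UnCI imageI)
  next
    case False
    then have bt0: "bt N = 0" by (simp add: bt_def)
    from eT[of N] consider "e N = 0" | n where "n \<ge> 1" "e N = 1 / real n" unfolding Tset_def by auto
    then show ?thesis
    proof cases
      case 1
      then have "((fst p + e N)/2, (snd p + bt N)/2) = D0_map p" using bt0 by (simp add: D0_map_def)
      then show ?thesis using that Keq by (metis UnCI imageI)
    next
      case 2
      then have "((fst p + e N)/2, (snd p + bt N)/2) = Dkn_map 0 n p" using bt0 by (simp add: Dkn_map_def tkn_def)
      moreover have "Dkn_map 0 n p \<in> (\<Union>k. \<Union>n\<in>{1..}. Dkn_map k n ` K)" using that 2 by blast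
      ultimately show ?thesis using Keq by (metis UnCI)
    qed
  qed
  have inK: "Gc e bt N p \<in> K" if "p \<in> K" for N p
    using that by (induction N arbitrary: p) (auto intro: step)
  obtain p0 where p0: "p0 \<in> K" using Kne by auto
  have se: "summable (\<lambda>i. e i / 2^(i+1))"
  proof (rule summable_comparison_test[where g="\<lambda>i. (1/2)^i"])
    show "summable (\<lambda>i. (1/2::real)^i)" by simp
    show "\<exists>N. \<forall>n\<ge>N. norm (e n / 2 ^ (n + 1)) \<le> (1 / 2) ^ n"
    proof (intro exI allI impI)
      fix n :: nat
      have "0 \<le> e n" "e n \<le> 1" using Tset_range[OF eT] by auto
      then show "norm (e n / 2 ^ (n + 1)) \<le> (1 / 2) ^ n" by (simp add: power_divide field_simps)
    qed
  qed
  have sb: "summable (\<lambda>i. bt i / 2^(i+1))"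
  proof (rule summable_comparison_test[where g="\<lambda>i. (1/2)^i"])
    show "summable (\<lambda>i. (1/2::real)^i)" by simp
    show "\<exists>N. \<forall>n\<ge>N. norm (bt n / 2 ^ (n + 1)) \<le> (1 / 2) ^ n"
      by (intro exI allI impI) (simp add: bt_def power_divide field_simps)
  qed
  have l1: "(\<lambda>N. (\<Sum>i<N. e i / 2 ^ (i + 1)) + fst p0 / 2^N) \<longlonglongrightarrow> (\<Sum>i. e i / 2 ^ (i + 1))"
    using tendsto_add[OF summable_LIMSEQ[OF se] LIMSEQ_divide_realpow_zero[of 2 "fst p0"]] by simp
  have l2: "(\<lambda>N. (\<Sum>i<N. bt i / 2 ^ (i + 1)) + snd p0 / 2^N) \<longlonglongrightarrow> (\<Sum>i. bt i / 2 ^ (i + 1))"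
    using tendsto_add[OF summable_LIMSEQ[OF sb] LIMSEQ_divide_realpow_zero[of 2 "snd p0"]] by simp
  have lim: "(\<lambda>N. Gc e bt N p0) \<longlonglongrightarrow> (suminf (\<lambda>i. e i / 2^(i+1)), suminf (\<lambda>i. bt i / 2^(i+1)))"
    unfolding Gc_formula by (rule tendsto_Pair[OF l1 l2])
  have "(suminf (\<lambda>i. e i / 2^(i+1)), suminf (\<lambda>i. bt i / 2^(i+1))) \<in> K"
    using closed_sequentially[OF compact_imp_closed[OF Kc] _ lim] inK[OF p0] by blast
  then show ?thesis by (simp add: bt_def)
qed



definition gsel :: "real \<Rightarrow> real" where
  "gsel u = (if u = 0 then 0 else 1 / real (nat \<lceil>1/u\<rceil>))"

lemma gsel_props:
  assumes "0 \<le> u" "u \<le> 1/8"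
  shows "gsel u \<in> Tset" "0 \<le> u - gsel u" "u - gsel u \<le> 1/64"
proof -
  have all: "gsel u \<in> Tset \<and> 0 \<le> u - gsel u \<and> u - gsel u \<le> 1/64"
  proof (cases "u = 0")
    case True then show ?thesis by (simp add: gsel_def Tset_def)
  next
    case False
    then have up: "u > 0" using assms by auto
    define n where "n = nat \<lceil>1/u\<rceil>"
    have "1/u \<ge> 8" using up assms by (simp add: field_simps)
    then have n1: "real n \<ge> 1/u" and n2: "real n < 1/u + 1"
      unfolding n_def by (auto, linarith)
    then have n8: "n \<ge> 1" using \<open>1/u \<ge> 8\<close> by linarith
    have g: "gsel u = 1 / real n" using False by (simp add: gsel_def n_def)
    have "gsel u \<in> Tset" unfolding g Tset_def using n8 by auto
    moreover have "1 / real n \<le> u" using n1 up n8 by (simp add: field_simps)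
    moreover have "u - 1 / real n \<le> 1/64"
    proof -
      have "1 / real n \<ge> 1 / (1/u + 1)" using n2 up n8 by (intro divide_left_mono) auto
      also have "1 / (1/u + 1) = u / (1 + u)" using up by (simp add: field_simps)
      finally have "u - 1 / real n \<le> u - u/(1+u)" by simp
      also have "\<dots> = u*u/(1+u)" using up by (simp add: field_simps)
      also have "\<dots> \<le> u*u" using up by (simp add: field_simps)
      also have "\<dots> \<le> (1/8)*(1/8)" using assms by (intro mult_mono) auto
      finally show ?thesis by simp
    qed
    ultimately show ?thesis unfolding g by simp
  qed
  then show "gsel u \<in> Tset" "0 \<le> u - gsel u" "u - gsel u \<le> 1/64" by auto
qed

lemma self_similar:
  assumes "0 \<le> x" "x \<le> 1/8"
  shows "\<exists>c. (\<forall>j. c j \<in> Tset) \<and> (\<lambda>j. c j / 8^j) sums x"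
proof -
  define u where "u = rec_nat x (\<lambda>j v. 8 * (v - gsel v))"
  have u0: "u 0 = x" and uS: "u (Suc j) = 8 * (u j - gsel (u j))" for j by (simp_all add: u_def)
  have ub: "0 \<le> u j \<and> u j \<le> 1/8" for j
  proof (induction j)
    case 0 then show ?case using assms u0 by simp
  next
    case (Suc j) then show ?case using gsel_props[of "u j"] uS[of j] by auto
  qed
  have ps: "(\<Sum>j<N. gsel (u j) / 8^j) = x - u N / 8^N" for N
  proof (induction N)
    case 0 then show ?case using u0 by simp
  next
    case (Suc N)
    have "u (Suc N) / 8^Suc N = (u N - gsel (u N)) / 8^N" using uS[of N] by (simp add: field_simps)
    then show ?case using Suc by (simp add: diff_divide_distrib)
  qed
  have "(\<lambda>N. u N / 8^N) \<longlonglongrightarrow> 0"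
  proof (rule Lim_null_comparison[where g="\<lambda>N. (1/8) / 8^N"])
    show "\<forall>\<^sub>F N in sequentially. norm (u N / 8 ^ N) \<le> 1 / 8 / 8 ^ N"
    proof (rule always_eventually, rule allI)
      fix N
      have "u N \<le> 1/8" "0 \<le> u N" using ub by auto
      have "u N / 8^N \<le> (1/8)/8^N" by (rule divide_right_mono) (use \<open>u N \<le> 1/8\<close> in auto)
      moreover have "norm (u N / 8^N) = u N / 8^N" using \<open>0 \<le> u N\<close> by simp
      ultimately show "norm (u N / 8^N) \<le> 1/8/8^N" by simp
    qed
    show "(\<lambda>N. 1 / 8 / 8 ^ N :: real) \<longlonglongrightarrow> 0" by (rule LIMSEQ_divide_realpow_zero) simp
  qed
  then have "(\<lambda>N. x - u N / 8^N) \<longlonglongrightarrow> x - 0" by (intro tendsto_diff) auto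
  then have "(\<lambda>j. gsel (u j) / 8^j) sums x" unfolding sums_def ps by simp
  moreover have "\<forall>j. gsel (u j) \<in> Tset" using gsel_props(1) ub by blast
  ultimately show ?thesis by (intro exI[of _ "\<lambda>j. gsel (u j)"]) simp
qed

definition T0 :: "real \<Rightarrow> real" where "T0 y = (if 2*y < 1 then 2*y else 2*y - 1)"

definition Zc :: "nat \<Rightarrow> real \<Rightarrow> nat" where
  "Zc N y = card {i. i < N \<and> 2 * (T0^^i) y < 1}"

lemma Zc_Suc: "Zc (Suc N) y = (if 2*y<1 then 1 else 0) + Zc N (T0 y)"
proof -
  let ?P = "\<lambda>i. 2 * (T0^^i) y < 1"
  have PS: "T0 ((T0^^i) y) = (T0^^i) (T0 y)" for i by (metis funpow_swap1)
  have eq: "{i. i < Suc N \<and> ?P i} = (if ?P 0 then {0} else {}) \<union> Suc ` {i. i < N \<and> 2 * (T0^^i) (T0 y) < 1}"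
    by (auto simp: PS image_iff less_Suc_eq_0_disj)
  have c1: "card {i. i < Suc N \<and> ?P i} = card (if ?P 0 then {0} else {}) + card (Suc ` {i. i < N \<and> 2 * (T0^^i) (T0 y) < 1})"
    unfolding eq by (cases "?P 0") (simp_all add: card_insert_if)
  have c2: "card (Suc ` {i. i < N \<and> 2 * (T0^^i) (T0 y) < 1}) = Zc N (T0 y)"
    unfolding Zc_def by (simp add: card_image)
  have c3: "card (if ?P 0 then {0} else {}) = (if 2*y<1 then 1 else 0)" by simp
  show ?thesis using c1 c2 by (cases "2*y<1") (simp_all add: Zc_def)
qed

lemma T0_meas[measurable]: "T0 \<in> borel_measurable borel"
  unfolding T0_def by measurable

lemma Zc_meas: "(\<lambda>y. f (Zc N y) :: real) \<in> borel_measurable borel"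
proof (induction N arbitrary: f)
  case 0 then show ?case by (simp add: Zc_def)
next
  case (Suc N)
  have m1[measurable]: "(\<lambda>y. f (Suc (Zc N (T0 y)))) \<in> borel_measurable borel"
    using measurable_compose[OF T0_meas Suc[of "\<lambda>k. f (Suc k)"]] by (simp add: o_def)
  have m2[measurable]: "(\<lambda>y. f (Zc N (T0 y))) \<in> borel_measurable borel"
    using measurable_compose[OF T0_meas Suc[of f]] by (simp add: o_def)
  have "(\<lambda>y. f (Zc (Suc N) y)) = (\<lambda>y. if 2*y < 1 then f (Suc (Zc N (T0 y))) else f (Zc N (T0 y)))"
    by (auto simp: Zc_Suc)
  also have "\<dots> \<in> borel_measurable borel" by measurable
  finally show ?case .
qed

definition FF :: "nat \<Rightarrow> real \<Rightarrow> ennreal" where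
  "FF N u = indicator {0..<1::real} u * ennreal ((27/64)^(Zc N u))"

lemma FF_meas[measurable]: "FF N \<in> borel_measurable borel"
proof -
  have [measurable]: "(\<lambda>u. (27/64::real)^(Zc N u)) \<in> borel_measurable borel" by (rule Zc_meas)
  show ?thesis unfolding FF_def by measurable
qed

lemma FF_Suc: "FF (Suc N) y = ennreal (27/64) * FF N (0 + 2*y) + FF N (-1 + 2*y)"
  unfolding FF_def using Zc_Suc[of N y]
  by (auto simp: T0_def indicator_def ennreal_mult[symmetric] power_Suc)

lemma FF_int: "(\<integral>\<^sup>+ y. FF N y \<partial>lborel) = ennreal ((91/128)^N)"
proof (induction N)
  case 0
  have "(\<integral>\<^sup>+ y. FF 0 y \<partial>lborel) = (\<integral>\<^sup>+ y. indicator {0..<1::real} y \<partial>lborel)"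
    by (simp add: FF_def Zc_def)
  also have "\<dots> = 1" by simp
  finally show ?case by simp
next
  case (Suc N)
  have aff: "(\<integral>\<^sup>+ y. FF N (t + 2*y) \<partial>lborel) = ennreal ((91/128)^N / 2)" for t
  proof -
    have "(\<integral>\<^sup>+ y. FF N y \<partial>lborel) = \<bar>2::real\<bar> * (\<integral>\<^sup>+ y. FF N (t + 2*y) \<partial>lborel)"
      by (rule nn_integral_real_affine) auto
    then have "ennreal ((91/128)^N) = ennreal 2 * (\<integral>\<^sup>+ y. FF N (t + 2*y) \<partial>lborel)"
      using Suc by simp
    then have "ennreal (1/2) * ennreal ((91/128)^N) = (ennreal (1/2) * ennreal 2) * (\<integral>\<^sup>+ y. FF N (t + 2*y) \<partial>lborel)"
      by (simp add: mult.assoc)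
    also have "ennreal (1/2) * ennreal 2 = 1" by (subst ennreal_mult[symmetric]) auto
    finally have h: "ennreal (1/2) * ennreal ((91/128)^N) = 1 * (\<integral>\<^sup>+ y. FF N (t + 2*y) \<partial>lborel)" .
    have e1: "ennreal (1/2) * ennreal ((91/128)^N) = ennreal ((91/128)^N / 2)" by (subst ennreal_mult[symmetric]) auto
    show ?thesis using h e1 by simp
  qed
  have "(\<integral>\<^sup>+ y. FF (Suc N) y \<partial>lborel) = (\<integral>\<^sup>+ y. ennreal (27/64) * FF N (0 + 2*y) + FF N (-1 + 2*y) \<partial>lborel)"
    by (simp add: FF_Suc)
  also have "\<dots> = (\<integral>\<^sup>+ y. ennreal (27/64) * FF N (0 + 2*y) \<partial>lborel) + (\<integral>\<^sup>+ y. FF N (-1 + 2*y) \<partial>lborel)"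
    by (rule nn_integral_add) measurable
  also have "(\<integral>\<^sup>+ y. ennreal (27/64) * FF N (0 + 2*y) \<partial>lborel) = ennreal (27/64) * (\<integral>\<^sup>+ y. FF N (0 + 2*y) \<partial>lborel)"
    by (rule nn_integral_cmult) measurable
  also have "ennreal (27/64) * (\<integral>\<^sup>+ y. FF N (0 + 2*y) \<partial>lborel) + (\<integral>\<^sup>+ y. FF N (-1 + 2*y) \<partial>lborel)
     = ennreal ((27/64) * ((91/128)^N / 2) + (91/128)^N / 2)"
    unfolding aff by (simp add: ennreal_mult[symmetric] ennreal_plus[symmetric] del: ennreal_plus)
  also have "(27/64) * ((91/128)^N / 2) + (91/128)^N / 2 = (91/128::real)^Suc N"
    by (simp add: field_simps)
  finally show ?case .
qed

definition BB :: "nat \<Rightarrow> real set" where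
  "BB N = {y. y \<in> {0..<1} \<and> 3 * Zc N y < N}"

lemma BB_sets[measurable]: "BB N \<in> sets borel"
proof -
  define f where "f k = (if 3 * k < N then 1 else 0::real)" for k
  have "(\<lambda>y. f (Zc N y)) \<in> borel_measurable borel" by (rule Zc_meas)
  then have "(\<lambda>y. f (Zc N y)) -` {1} \<inter> space borel \<in> sets borel" by (rule measurable_sets) auto
  moreover have "{0..<1::real} \<in> sets borel" by simp
  ultimately have "((\<lambda>y. f (Zc N y)) -` {1} \<inter> space borel) \<inter> {0..<1} \<in> sets borel" by blast
  moreover have "((\<lambda>y. f (Zc N y)) -` {1} \<inter> space borel) \<inter> {0..<1} = BB N"
    by (auto simp: BB_def f_def split: if_splits)
  ultimately show ?thesis by simp
qed

lemma BB_emeasure: "emeasure lborel (BB N) \<le> ennreal ((91/96)^N)"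
proof -
  have pt: "indicator (BB N) y \<le> ennreal ((4/3)^N) * FF N y" for y
  proof (cases "y \<in> BB N")
    case True
    then have "3 * Zc N y \<le> N" "y \<in> {0..<1}" by (auto simp: BB_def)
    have "(3/4::real)^N \<le> (3/4)^(3 * Zc N y)"
      by (rule power_decreasing) (use \<open>3 * Zc N y \<le> N\<close> in auto)
    also have "\<dots> = ((3/4)^3)^(Zc N y)" by (rule power_mult)
    also have "(3/4::real)^3 = 27/64" by (simp add: power3_eq_cube)
    finally have "(4/3::real)^N * (3/4)^N \<le> (4/3)^N * (27/64)^(Zc N y)" by (intro mult_left_mono) auto
    moreover have "(4/3::real)^N * (3/4)^N = 1" by (simp add: power_mult_distrib[symmetric])
    ultimately have "1 \<le> (4/3::real)^N * (27/64)^(Zc N y)" by simp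
    then show ?thesis using True \<open>y \<in> {0..<1}\<close>
      by (simp add: FF_def ennreal_mult[symmetric])
  qed (simp)
  have "emeasure lborel (BB N) = (\<integral>\<^sup>+ y. indicator (BB N) y \<partial>lborel)" by simp
  also have "\<dots> \<le> (\<integral>\<^sup>+ y. ennreal ((4/3)^N) * FF N y \<partial>lborel)" by (rule nn_integral_mono) (rule pt)
  also have "\<dots> = ennreal ((4/3)^N) * ennreal ((91/128)^N)" by (subst nn_integral_cmult) (auto simp: FF_int)
  also have "\<dots> = ennreal ((91/96)^N)" by (simp add: ennreal_mult[symmetric] power_mult_distrib[symmetric])
  finally show ?thesis .
qed

lemma AE_count: "AE y in lborel. \<forall>\<^sub>F N in sequentially. y \<notin> BB N"
proof -
  have fin: "emeasure lborel (BB N) < \<infinity>" for N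
    using BB_emeasure[of N] by (simp add: le_less_trans)
  have mle: "measure lborel (BB N) \<le> (91/96)^N" for N
    unfolding measure_def by (rule enn2real_leI) (auto intro: BB_emeasure)
  have "summable (\<lambda>N. measure lborel (BB N))"
    by (rule summable_comparison_test[where g="\<lambda>N. (91/96::real)^N"]) (auto intro!: exI[of _ 0] mle)
  from borel_cantelli_AE1[OF _ fin this] show ?thesis by simp
qed



lemma T0_range: "0 \<le> y \<Longrightarrow> y < 1 \<Longrightarrow> 0 \<le> T0 y \<and> T0 y < 1"
  by (simp add: T0_def)

lemma digits_sum:
  assumes y: "0 \<le> y" "y < 1"
  shows "y = suminf (\<lambda>i. (if \<not> 2 * (T0^^i) y < 1 then 1 else 0) / 2^(i+1))"
proof -
  define yy where "yy i = (T0^^i) y" for i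
  define bt where "bt i = (if \<not> 2 * yy i < 1 then 1 else 0::real)" for i
  have yr: "0 \<le> yy i \<and> yy i < 1" for i
    by (induction i) (use y T0_range in \<open>auto simp: yy_def\<close>)
  have yS: "yy (Suc i) = 2 * yy i - bt i" for i
    by (simp add: yy_def bt_def T0_def)
  have ps: "(\<Sum>i<N. bt i / 2^(i+1)) = y - yy N / 2^N" for N
  proof (induction N)
    case 0 then show ?case by (simp add: yy_def)
  next
    case (Suc N)
    have "yy (Suc N) / 2^Suc N = yy N / 2^N - bt N / 2^(N+1)" using yS[of N] by (simp add: field_simps)
    then show ?case using Suc by simp
  qed
  have "(\<lambda>N. yy N / 2^N) \<longlonglongrightarrow> 0"
  proof (rule Lim_null_comparison[where g="\<lambda>N. 1 / 2^N"])
    show "\<forall>\<^sub>F N in sequentially. norm (yy N / 2 ^ N) \<le> 1 / 2 ^ N"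
    proof (rule always_eventually, rule allI)
      fix N
      have "yy N / 2^N \<le> 1/2^N" by (rule divide_right_mono) (use yr[of N] in auto)
      moreover have "norm (yy N / 2^N) = yy N / 2^N" using yr[of N] by simp
      ultimately show "norm (yy N / 2^N) \<le> 1/2^N" by simp
    qed
    show "(\<lambda>N. 1 / 2 ^ N :: real) \<longlonglongrightarrow> 0" by (rule LIMSEQ_divide_realpow_zero) simp
  qed
  then have "(\<lambda>N. y - yy N / 2^N) \<longlonglongrightarrow> y - 0" by (intro tendsto_diff) auto
  then have "(\<lambda>i. bt i / 2^(i+1)) sums y" unfolding sums_def ps by simp
  then show ?thesis by (simp add: sums_unique bt_def yy_def)
qed

lemma Tset_div2: "t \<in> Tset \<Longrightarrow> t / 2^d \<in> Tset"
proof -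
  assume "t \<in> Tset"
  then consider "t = 0" | n where "n \<ge> 1" "t = 1 / real n" unfolding Tset_def by auto
  then show ?thesis
  proof cases
    case 1 then show ?thesis by (simp add: Tset_def)
  next
    case 2
    have "t / 2^d = 1 / real (n * 2^d)" using 2 by simp
    moreover have "n * 2^d \<ge> 1" using 2 by simp
    ultimately show ?thesis unfolding Tset_def by blast
  qed
qed

lemma fibre_interval:
  assumes att: "is_attractor K" and y: "0 \<le> y" "y < 1"
    and N0: "\<And>N. N \<ge> N0 \<Longrightarrow> N \<le> 3 * Zc N y"
  shows "\<exists>a b. a < b \<and> {a..b} \<subseteq> fibre K y"
proof -
  define S where "S = {i. 2 * (T0^^i) y < 1}"
  have Zc_S: "Zc N y = card {i. i < N \<and> i \<in> S}" for N by (simp add: Zc_def S_def)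
  have infS: "infinite S"
  proof
    assume fS: "finite S"
    define N where "N = max N0 (3 * card S + 1)"
    have "card {i. i < N \<and> i \<in> S} \<le> card S" using fS by (intro card_mono) auto
    moreover have "N \<le> 3 * card {i. i < N \<and> i \<in> S}" using N0[of N] Zc_S[of N] by (simp add: N_def)
    ultimately show False by (simp add: N_def)
  qed
  define p where "p = enumerate S"
  have smp: "strict_mono p" and rp: "range p = S" using infS by (simp_all add: p_def strict_mono_enumerate range_enumerate)
  define M where "M = N0 + 2"
  have pb: "p j \<le> 3*j + M" for j
  proof (rule ccontr)
    assume "\<not> p j \<le> 3*j + M"
    then have pj: "p j \<ge> 3*(j+1) + N0" by (simp add: M_def)
    define N where "N = 3*(j+1) + N0"
    have "{i. i < N \<and> i \<in> S} \<subseteq> p ` {..<j}"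
    proof
      fix i assume "i \<in> {i. i < N \<and> i \<in> S}"
      then have iN: "i < N" and iS: "i \<in> S" by auto
      then obtain k where k: "i = p k" using rp by blast
      have "k < j"
      proof (rule ccontr)
        assume "\<not> k < j"
        then have "p j \<le> p k" using smp by (simp add: strict_mono_less_eq)
        then show False using pj iN k by (simp add: N_def)
      qed
      then show "i \<in> p ` {..<j}" using k by blast
    qed
    then have "card {i. i < N \<and> i \<in> S} \<le> card (p ` {..<j})" by (intro card_mono) auto
    also have "\<dots> \<le> j" using card_image_le[of "{..<j}" p] by simp
    finally have "card {i. i < N \<and> i \<in> S} \<le> j" .
    moreover have "N \<le> 3 * card {i. i < N \<and> i \<in> S}" using N0[of N] Zc_S[of N] by (simp add: N_def)
    ultimately show False by (simp add: N_def)
  qed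
  define b :: real where "b = 1 / (8 * 2^(M+1))"
  have bpos: "0 < b" by (simp add: b_def)
  have "{0..b} \<subseteq> fibre K y"
  proof
    fix X assume X: "X \<in> {0..b}"
    define x where "x = X * 2^(M+1)"
    have x0: "0 \<le> x" and x8: "x \<le> 1/8" using X by (auto simp: x_def b_def field_simps)
    obtain c where cT: "\<And>j. c j \<in> Tset" and cs: "(\<lambda>j. c j / 8^j) sums x"
      using self_similar[OF x0 x8] by blast
    define c' where "c' j = c j / 2^(3*j + M - p j)" for j
    have c'T: "c' j \<in> Tset" for j unfolding c'_def by (rule Tset_div2[OF cT])
    define e where "e i = (if i \<in> S then c' (inv p i) else 0)" for i
    have inj: "inj p" using smp strict_mono_imp_inj_on by blast
    have ep: "e (p j) = c' j" for j using rp inj by (auto simp: e_def inv_f_f)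
    have pw: "(2::real)^(3*j + M - p j) * 2^(p j + 1) = 8^j * 2^(M+1)" for j
    proof -
      have "(2::real)^(3*j + M - p j) * 2^(p j + 1) = 2^((3*j + M - p j) + (p j + 1))" by (simp add: power_add)
      also have "(3*j + M - p j) + (p j + 1) = 3*j + (M+1)" using pb[of j] by simp
      also have "(2::real)^(3*j + (M+1)) = 8^j * 2^(M+1)" by (simp add: power_add power_mult)
      finally show ?thesis .
    qed
    have "(\<lambda>j. e (p j) / 2^(p j + 1)) = (\<lambda>j. c j / 8^j / 2^(M+1))"
    proof
      fix j
      have "e (p j) / 2^(p j + 1) = c j / (2^(3*j + M - p j) * 2^(p j + 1))" by (simp add: ep c'_def)
      also have "\<dots> = c j / 8^j / 2^(M+1)" by (simp only: pw divide_divide_eq_left)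
      finally show "e (p j) / 2^(p j + 1) = c j / 8^j / 2^(M+1)" .
    qed
    moreover have "(\<lambda>j. c j / 8^j / 2^(M+1)) sums (x / 2^(M+1))" by (rule sums_divide[OF cs])
    ultimately have "(\<lambda>j. e (p j) / 2^(p j + 1)) sums X" by (simp add: x_def)
    then have es: "(\<lambda>i. e i / 2^(i + 1)) sums X"
      by (subst (asm) sums_mono_reindex[OF smp]) (auto simp: e_def rp)
    have eT: "e i \<in> Tset" for i using c'T by (simp add: e_def Tset_def)
    have ez: "i \<notin> S \<Longrightarrow> e i = 0" for i by (simp add: e_def)
    have "(suminf (\<lambda>i. e i / 2^(i+1)), suminf (\<lambda>i. (if i \<notin> S then 1 else 0) / 2^(i+1))) \<in> K"
      by (rule code_in_K[OF att eT ez])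
    moreover have "suminf (\<lambda>i. e i / 2^(i+1)) = X" using es sums_unique by metis
    moreover have "suminf (\<lambda>i. (if i \<notin> S then 1 else 0) / 2^(i+1)) = y"
      using digits_sum[OF y] by (simp add: S_def)
    ultimately show "X \<in> fibre K y" by (simp add: fibre_def)
  qed
  then show ?thesis using bpos by blast
qed

theorem proposition2p5:
  fixes K :: "(real \<times> real) set"
  assumes "is_attractor K"
  shows "AE y in lebesgue. y \<in> {0..1} \<longrightarrow> (\<exists>a b. a < b \<and> {a..b} \<subseteq> fibre K y)"
proof -
  have "AE y in lborel. y \<in> {0..1} \<longrightarrow> (\<exists>a b. a < b \<and> {a..b} \<subseteq> fibre K y)"
    using AE_count AE_lborel_singleton[of "1::real"]
  proof eventually_elim
    case (elim y)
    show ?case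
    proof
      assume "y \<in> {0..1}"
      then have y: "0 \<le> y" "y < 1" using elim(2) by auto
      from elim(1) obtain N0 where N0: "\<And>N. N \<ge> N0 \<Longrightarrow> y \<notin> BB N"
        unfolding eventually_sequentially by blast
      have "N \<le> 3 * Zc N y" if "N \<ge> N0" for N
        using N0[OF that] y by (auto simp: BB_def)
      then show "\<exists>a b. a < b \<and> {a..b} \<subseteq> fibre K y"
        by (rule fibre_interval[OF assms y])
    qed
  qed
  then show ?thesis by (rule AE_completion)
qed

end
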